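(* Let $(E,j)$, $(\tilde E,\tilde j)$ be soft inductive systems over the same directed set and $T_\bullet$ a uniformly bounded net of bounded linear operators $T_n:E_n\to\tilde E_n$. (1) If $T_\bullet$ maps every $j$-basic net to a $\tilde j$-convergent net, then $T_\bullet$ is $j\tilde j$-convergent. (2) $T_\bullet$ is $j\tilde j$-convergent if and only if $\lim_{n\gg m}\|(\tilde j_{nm}T_m-T_nj_{nm})x_m\|=0$ for every $x_\bullet\in C(E,j)$ (where $x_m$ is the $m$-th entry of $x_\bullet$). (3) If $T_\bullet$ is $j\tilde j$-convergent and $S_\bullet$ is a uniformly bounded $\tilde j\hat j$-convergent net of operators $S_n:\tilde E_n\to\hat E_n$ into a soft inductive system $(\hat E,\hat j)$, then $(S_nT_n)_n$ is $j\hat j$-convergent and $(ST)_\infty=S_\infty T_\infty$.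
   Context: Let $(N,\le)$ be a directed set; $\lim_{n\gg m}a_{nm}:=\lim_m\limsup_n a_{nm}$. A soft inductive system $(E,j)$: Banach spaces $E_n$, linear contractions $j_{nm}:E_m\to E_n$ ($n\ge m$), $j_{nn}=\mathrm{id}$, $j_{nm}=0$ if $n\not\ge m$, with $\lim_{n\gg m}\|(j_{nl}-j_{nm}j_{ml})x_l\|=0$ for all $l,x_l$. Nets $x_\bullet=(x_n)$, $x_n\in E_n$; seminorm $|x_\bullet|=\limsup_n\|x_n\|$. Basic nets $j_{\bullet m}x_m=(j_{nm}x_m)_n$. $C(E,j)$: seminorm closure of the basic nets in the space of uniformly bounded nets; $C_0(E,j)$: nets with $\|x_n\|\to0$; $E_\infty=C(E,j)/C_0(E,j)$. A uniformly bounded net $T_\bullet$ is $j\tilde j$-convergent if $(T_nx_n)\in C(\tilde E,\tilde j)$ for all $x_\bullet\in C(E,j)$; its limit $T_\infty:E_\infty\to\tilde E_\infty$ is defined by $T_\infty(j\text{-}\lim_nx_n)=\tilde j\text{-}\lim_nT_nx_n$. *)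

theory Defs
  imports "HOL-Analysis.Analysis"
begin

definition directed_set :: "('i \<Rightarrow> 'i \<Rightarrow> bool) \<Rightarrow> bool" where
  "directed_set le \<longleftrightarrow> (\<forall>n. le n n) \<and> (\<forall>a b c. le a b \<longrightarrow> le b c \<longrightarrow> le a c)
     \<and> (\<forall>a b. \<exists>c. le a c \<and> le b c)"

definition dir_filter :: "('i \<Rightarrow> 'i \<Rightarrow> bool) \<Rightarrow> 'i filter" where
  "dir_filter le = (INF m. principal {n. le m n})"

text \<open>lim_{n>>m} a_{nm} = 0, i.e. lim_m limsup_n a_{nm} = 0.\<close>
definition lim_gg_zero :: "('i \<Rightarrow> 'i \<Rightarrow> bool) \<Rightarrow> ('i \<Rightarrow> 'i \<Rightarrow> real) \<Rightarrow> bool" where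
  "lim_gg_zero le a \<longleftrightarrow>
     ((\<lambda>m. Limsup (dir_filter le) (\<lambda>n. ereal (a n m))) \<longlongrightarrow> 0) (dir_filter le)"

text \<open>Banach spaces E_n are modelled as closed linear subspaces of one ambient Banach space.\<close>
definition soft_ind_sys ::
  "('i \<Rightarrow> 'i \<Rightarrow> bool) \<Rightarrow> ('i \<Rightarrow> 'a::banach set) \<Rightarrow> ('i \<Rightarrow> 'i \<Rightarrow> 'a \<Rightarrow> 'a) \<Rightarrow> bool" where
  "soft_ind_sys le E j \<longleftrightarrow>
     directed_set le \<and>
     (\<forall>n. subspace (E n) \<and> closed (E n)) \<and>
     (\<forall>n m. le m n \<longrightarrow>
        (\<forall>x\<in>E m. j n m x \<in> E n \<and> norm (j n m x) \<le> norm x) \<and>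
        (\<forall>x\<in>E m. \<forall>y\<in>E m. j n m (x + y) = j n m x + j n m y) \<and>
        (\<forall>c. \<forall>x\<in>E m. j n m (c *\<^sub>R x) = c *\<^sub>R j n m x)) \<and>
     (\<forall>n. \<forall>x\<in>E n. j n n x = x) \<and>
     (\<forall>n m. \<not> le m n \<longrightarrow> (\<forall>x\<in>E m. j n m x = 0)) \<and>
     (\<forall>l. \<forall>x\<in>E l. lim_gg_zero le (\<lambda>n m. norm (j n l x - j n m (j m l x))))"

definition is_net :: "('i \<Rightarrow> 'a set) \<Rightarrow> ('i \<Rightarrow> 'a) \<Rightarrow> bool" where
  "is_net E x \<longleftrightarrow> (\<forall>n. x n \<in> E n)"

definition unif_bounded :: "('i \<Rightarrow> 'a::real_normed_vector) \<Rightarrow> bool" where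
  "unif_bounded x \<longleftrightarrow> (\<exists>B. \<forall>n. norm (x n) \<le> B)"

definition net_seminorm :: "('i \<Rightarrow> 'i \<Rightarrow> bool) \<Rightarrow> ('i \<Rightarrow> 'a::real_normed_vector) \<Rightarrow> ereal" where
  "net_seminorm le x = Limsup (dir_filter le) (\<lambda>n. ereal (norm (x n)))"

definition basic_net :: "('i \<Rightarrow> 'i \<Rightarrow> 'a \<Rightarrow> 'a) \<Rightarrow> 'i \<Rightarrow> 'a \<Rightarrow> ('i \<Rightarrow> 'a)" where
  "basic_net j m xm = (\<lambda>n. j n m xm)"

definition Cnets ::
  "('i \<Rightarrow> 'i \<Rightarrow> bool) \<Rightarrow> ('i \<Rightarrow> 'a::banach set) \<Rightarrow> ('i \<Rightarrow> 'i \<Rightarrow> 'a \<Rightarrow> 'a) \<Rightarrow> ('i \<Rightarrow> 'a) set" where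
  "Cnets le E j = {x. is_net E x \<and> unif_bounded x \<and>
     (\<forall>e>0. \<exists>m. \<exists>xm\<in>E m. net_seminorm le (\<lambda>n. x n - basic_net j m xm n) < ereal e)}"

definition C0nets :: "('i \<Rightarrow> 'i \<Rightarrow> bool) \<Rightarrow> ('i \<Rightarrow> 'a::banach set) \<Rightarrow> ('i \<Rightarrow> 'a) set" where
  "C0nets le E = {x. is_net E x \<and> unif_bounded x \<and>
     ((\<lambda>n. norm (x n)) \<longlongrightarrow> 0) (dir_filter le)}"

text \<open>j-lim_n x_n: the class of x in E_infinity = C(E,j)/C_0(E,j).\<close>
definition jlim ::
  "('i \<Rightarrow> 'i \<Rightarrow> bool) \<Rightarrow> ('i \<Rightarrow> 'a::banach set) \<Rightarrow> ('i \<Rightarrow> 'i \<Rightarrow> 'a \<Rightarrow> 'a) \<Rightarrow> ('i \<Rightarrow> 'a) \<Rightarrow> ('i \<Rightarrow> 'a) set" where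
  "jlim le E j x = {y \<in> Cnets le E j. (\<lambda>n. y n - x n) \<in> C0nets le E}"

definition Einf ::
  "('i \<Rightarrow> 'i \<Rightarrow> bool) \<Rightarrow> ('i \<Rightarrow> 'a::banach set) \<Rightarrow> ('i \<Rightarrow> 'i \<Rightarrow> 'a \<Rightarrow> 'a) \<Rightarrow> ('i \<Rightarrow> 'a) set set" where
  "Einf le E j = jlim le E j ` Cnets le E j"

definition bounded_op_net ::
  "('i \<Rightarrow> 'a::banach set) \<Rightarrow> ('i \<Rightarrow> 'b::banach set) \<Rightarrow> ('i \<Rightarrow> 'a \<Rightarrow> 'b) \<Rightarrow> bool" where
  "bounded_op_net E Et T \<longleftrightarrow>
     (\<forall>n. (\<forall>x\<in>E n. T n x \<in> Et n) \<and>
          (\<forall>x\<in>E n. \<forall>y\<in>E n. T n (x + y) = T n x + T n y) \<and>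
          (\<forall>c. \<forall>x\<in>E n. T n (c *\<^sub>R x) = c *\<^sub>R T n x)) \<and>
     (\<exists>B. \<forall>n. \<forall>x\<in>E n. norm (T n x) \<le> B * norm x)"

definition op_convergent ::
  "('i \<Rightarrow> 'i \<Rightarrow> bool) \<Rightarrow> ('i \<Rightarrow> 'a::banach set) \<Rightarrow> ('i \<Rightarrow> 'i \<Rightarrow> 'a \<Rightarrow> 'a)
    \<Rightarrow> ('i \<Rightarrow> 'b::banach set) \<Rightarrow> ('i \<Rightarrow> 'i \<Rightarrow> 'b \<Rightarrow> 'b) \<Rightarrow> ('i \<Rightarrow> 'a \<Rightarrow> 'b) \<Rightarrow> bool" where
  "op_convergent le E j Et jt T \<longleftrightarrow> bounded_op_net E Et T \<and>
     (\<forall>x\<in>Cnets le E j. (\<lambda>n. T n (x n)) \<in> Cnets le Et jt)"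

definition op_limit ::
  "('i \<Rightarrow> 'i \<Rightarrow> bool) \<Rightarrow> ('i \<Rightarrow> 'b::banach set) \<Rightarrow> ('i \<Rightarrow> 'i \<Rightarrow> 'b \<Rightarrow> 'b)
    \<Rightarrow> ('i \<Rightarrow> 'a \<Rightarrow> 'b) \<Rightarrow> ('i \<Rightarrow> 'a) set \<Rightarrow> ('i \<Rightarrow> 'b) set" where
  "op_limit le Et jt T X = jlim le Et jt (\<lambda>n. T n ((SOME x. x \<in> X) n))"

end

theory Submission imports Defs begin

lemma dir_ev:
  assumes "directed_set le"
  shows "eventually P (dir_filter le) \<longleftrightarrow> (\<exists>m. \<forall>n. le m n \<longrightarrow> P n)"
proof -
  have "eventually P (dir_filter le) = (\<exists>b\<in>UNIV. eventually P (principal {n. le b n}))"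
    unfolding dir_filter_def
  proof (rule eventually_INF_base)
    fix a b :: 'a
    obtain c where "le a c" "le b c" using assms unfolding directed_set_def by blast
    then have "principal {n. le c n} \<le> inf (principal {n. le a n}) (principal {n. le b n})"
      using assms unfolding directed_set_def by (auto simp: inf_principal)
    then show "\<exists>x\<in>UNIV. principal {n. le x n} \<le> inf (principal {n. le a n}) (principal {n. le b n})"
      by blast
  qed auto
  then show ?thesis by (simp add: eventually_principal)
qed

lemma dir_nbot:
  assumes "directed_set le" shows "dir_filter le \<noteq> bot"
  using assms by (auto simp: eventually_False[symmetric] dir_ev directed_set_def)

definition gg0 :: "('i \<Rightarrow> 'i \<Rightarrow> bool) \<Rightarrow> ('i \<Rightarrow> 'i \<Rightarrow> real) \<Rightarrow> bool" where
  "gg0 le a \<longleftrightarrow> (\<forall>e>0. \<forall>\<^sub>F m in dir_filter le. \<forall>\<^sub>F n in dir_filter le. a n m < e)"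

lemma lim_gg_zero_iff:
  assumes "directed_set le" and nn: "\<And>n m. a n m \<ge> 0"
  shows "lim_gg_zero le a \<longleftrightarrow> gg0 le a"
proof
  assume L: "lim_gg_zero le a"
  show "gg0 le a" unfolding gg0_def
  proof (intro allI impI)
    fix e :: real assume "e > 0"
    then have "\<forall>\<^sub>F m in dir_filter le. Limsup (dir_filter le) (\<lambda>n. ereal (a n m)) < ereal e"
      using L unfolding lim_gg_zero_def by (intro order_tendstoD(2)) auto
    then show "\<forall>\<^sub>F m in dir_filter le. \<forall>\<^sub>F n in dir_filter le. a n m < e"
      by eventually_elim (drule Limsup_lessD, auto)
  qed
next
  assume G: "gg0 le a"
  have nb: "dir_filter le \<noteq> bot" using dir_nbot[OF assms(1)] .
  show "lim_gg_zero le a" unfolding lim_gg_zero_def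
  proof (rule order_tendstoI)
    fix l :: ereal assume "l < 0"
    have "\<forall>m. 0 \<le> Limsup (dir_filter le) (\<lambda>n. ereal (a n m))"
      using nb nn by (auto intro!: le_Limsup)
    then show "\<forall>\<^sub>F m in dir_filter le. l < Limsup (dir_filter le) (\<lambda>n. ereal (a n m))"
      using \<open>l < 0\<close> by (intro always_eventually allI) (meson order.strict_trans2)
  next
    fix u :: ereal assume "0 < u"
    then obtain z where z: "0 < ereal z" "ereal z < u" using ereal_dense2 by blast
    then have "z > 0" by simp
    then have "\<forall>\<^sub>F m in dir_filter le. \<forall>\<^sub>F n in dir_filter le. a n m < z"
      using G unfolding gg0_def by auto
    then show "\<forall>\<^sub>F m in dir_filter le. Limsup (dir_filter le) (\<lambda>n. ereal (a n m)) < u"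
    proof eventually_elim
      case (elim m)
      then have "Limsup (dir_filter le) (\<lambda>n. ereal (a n m)) \<le> ereal z"
        by (intro Limsup_bounded) (auto elim: eventually_mono)
      then show ?case using z by auto
    qed
  qed
qed

lemma Cnets_iff:
  assumes "directed_set le"
  shows "x \<in> Cnets le E j \<longleftrightarrow> is_net E x \<and> unif_bounded x \<and>
     (\<forall>e>0. \<exists>m. \<exists>xm\<in>E m. \<forall>\<^sub>F n in dir_filter le. norm (x n - j n m xm) < e)"
proof -
  have 1: "\<exists>m. \<exists>xm\<in>E m. \<forall>\<^sub>F n in dir_filter le. norm (x n - j n m xm) < e"
    if "\<exists>m. \<exists>xm\<in>E m. net_seminorm le (\<lambda>n. x n - basic_net j m xm n) < ereal e" for e
    using that unfolding net_seminorm_def basic_net_def by (auto dest!: Limsup_lessD) blast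
  have 2: "\<exists>m. \<exists>xm\<in>E m. net_seminorm le (\<lambda>n. x n - basic_net j m xm n) < ereal e"
    if "e > 0" and h: "\<exists>m. \<exists>xm\<in>E m. \<forall>\<^sub>F n in dir_filter le. norm (x n - j n m xm) < e/2" for e
  proof -
    obtain m xm where xm: "xm \<in> E m" "\<forall>\<^sub>F n in dir_filter le. norm (x n - j n m xm) < e/2"
      using h by blast
    then have "net_seminorm le (\<lambda>n. x n - basic_net j m xm n) \<le> ereal (e/2)"
      unfolding net_seminorm_def basic_net_def
      by (intro Limsup_bounded) (auto elim: eventually_mono)
    also have "\<dots> < ereal e" using \<open>e > 0\<close> by simp
    finally show ?thesis using xm by blast
  qed
  have "(\<forall>e>0. \<exists>m. \<exists>xm\<in>E m. net_seminorm le (\<lambda>n. x n - basic_net j m xm n) < ereal e) \<longleftrightarrow>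
        (\<forall>e>0. \<exists>m. \<exists>xm\<in>E m. \<forall>\<^sub>F n in dir_filter le. norm (x n - j n m xm) < e)"
    using 1 2 by (meson half_gt_zero)
  then show ?thesis unfolding Cnets_def by blast
qed

lemma soft_dir: "soft_ind_sys le E j \<Longrightarrow> directed_set le"
  by (simp add: soft_ind_sys_def)

lemma soft_sub: "soft_ind_sys le E j \<Longrightarrow> subspace (E n)"
  by (simp add: soft_ind_sys_def)

lemma soft_in: "soft_ind_sys le E j \<Longrightarrow> y \<in> E m \<Longrightarrow> j n m y \<in> E n"
  unfolding soft_ind_sys_def by (metis subspace_0)

lemma soft_norm: "soft_ind_sys le E j \<Longrightarrow> y \<in> E m \<Longrightarrow> norm (j n m y) \<le> norm y"
  unfolding soft_ind_sys_def by (metis norm_ge_zero norm_zero)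

lemma soft_diff:
  assumes "soft_ind_sys le E j" "a \<in> E m" "b \<in> E m"
  shows "j n m (a - b) = j n m a - j n m b"
proof (cases "le m n")
  case True
  have s: "subspace (E m)" using assms(1) by (simp add: soft_ind_sys_def)
  have "(-1) *\<^sub>R b \<in> E m" using s assms(3) by (simp add: subspace_neg)
  then have "j n m (a + (-1) *\<^sub>R b) = j n m a + j n m ((-1) *\<^sub>R b)"
    using assms True unfolding soft_ind_sys_def by blast
  also have "j n m ((-1) *\<^sub>R b) = (-1) *\<^sub>R j n m b"
    using assms True unfolding soft_ind_sys_def by blast
  finally show ?thesis by simp
next
  case False
  have s: "subspace (E m)" using assms(1) by (simp add: soft_ind_sys_def)
  have "a - b \<in> E m" using s assms by (simp add: subspace_diff)
  then show ?thesis using assms False unfolding soft_ind_sys_def by simp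
qed

lemma soft_gg:
  assumes "soft_ind_sys le E j" "y \<in> E l"
  shows "gg0 le (\<lambda>n m. norm (j n l y - j n m (j m l y)))"
  using assms lim_gg_zero_iff[OF soft_dir[OF assms(1)]] unfolding soft_ind_sys_def by simp

lemma op_in: "bounded_op_net E Et T \<Longrightarrow> x \<in> E n \<Longrightarrow> T n x \<in> Et n"
  by (simp add: bounded_op_net_def)

lemma op_diff:
  assumes "bounded_op_net E Et T" "subspace (E n)" "a \<in> E n" "b \<in> E n"
  shows "T n (a - b) = T n a - T n b"
proof -
  have "(-1) *\<^sub>R b \<in> E n" using assms by (simp add: subspace_neg)
  then have "T n (a + (-1) *\<^sub>R b) = T n a + T n ((-1) *\<^sub>R b)"
    using assms unfolding bounded_op_net_def by blast
  also have "T n ((-1) *\<^sub>R b) = (-1) *\<^sub>R T n b"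
    using assms unfolding bounded_op_net_def by blast
  finally show ?thesis by simp
qed

lemma op_bound:
  assumes "bounded_op_net E Et T"
  obtains B where "B > 0" "\<And>n x. x \<in> E n \<Longrightarrow> norm (T n x) \<le> B * norm x"
proof -
  obtain B where B: "\<And>n x. x \<in> E n \<Longrightarrow> norm (T n x) \<le> B * norm x"
    using assms unfolding bounded_op_net_def by blast
  have "norm (T n x) \<le> (max B 0 + 1) * norm x" if "x \<in> E n" for n x
  proof -
    have "B * norm x \<le> (max B 0 + 1) * norm x" by (intro mult_right_mono) auto
    then show ?thesis using B[OF that] by linarith
  qed
  then show ?thesis using that[of "max B 0 + 1"] by auto
qed

lemma gg0_mono:
  assumes "gg0 le a" "\<And>n m. b n m \<le> a n m"
  shows "gg0 le b"
  unfolding gg0_def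
proof (intro allI impI)
  fix e :: real assume "e > 0"
  then have "\<forall>\<^sub>F m in dir_filter le. \<forall>\<^sub>F n in dir_filter le. a n m < e"
    using assms unfolding gg0_def by auto
  then show "\<forall>\<^sub>F m in dir_filter le. \<forall>\<^sub>F n in dir_filter le. b n m < e"
    by (elim eventually_mono) (metis assms(2) order.strict_trans1)
qed

lemma gg0_add:
  assumes "gg0 le a" "gg0 le b"
  shows "gg0 le (\<lambda>n m. a n m + b n m)"
  unfolding gg0_def
proof (intro allI impI)
  fix e :: real assume "e > 0"
  then have "\<forall>\<^sub>F m in dir_filter le. \<forall>\<^sub>F n in dir_filter le. a n m < e/2"
     "\<forall>\<^sub>F m in dir_filter le. \<forall>\<^sub>F n in dir_filter le. b n m < e/2"
    using assms unfolding gg0_def by (meson half_gt_zero)+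
  then show "\<forall>\<^sub>F m in dir_filter le. \<forall>\<^sub>F n in dir_filter le. a n m + b n m < e"
  proof eventually_elim
    case (elim m)
    from elim(1,2) show ?case by eventually_elim simp
  qed
qed

lemma gg0_scale:
  assumes "gg0 le a" "B > 0"
  shows "gg0 le (\<lambda>n m. B * a n m)"
  unfolding gg0_def
proof (intro allI impI)
  fix e :: real assume "e > 0"
  then have "\<forall>\<^sub>F m in dir_filter le. \<forall>\<^sub>F n in dir_filter le. a n m < e/B"
    using assms \<open>e>0\<close> unfolding gg0_def by (meson divide_pos_pos)
  then show "\<forall>\<^sub>F m in dir_filter le. \<forall>\<^sub>F n in dir_filter le. B * a n m < e"
    by (elim eventually_mono) (use \<open>B > 0\<close> in \<open>simp add: field_simps\<close>)
qed

lemma Cnets_gg: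
  assumes S: "soft_ind_sys le E j"
  shows "x \<in> Cnets le E j \<longleftrightarrow> is_net E x \<and> unif_bounded x \<and>
     gg0 le (\<lambda>n m. norm (x n - j n m (x m)))"
proof
  have D: "directed_set le" using soft_dir[OF S] .
  assume xC: "x \<in> Cnets le E j"
  then have net: "is_net E x" and ub: "unif_bounded x"
    and C: "\<forall>e>0. \<exists>m. \<exists>xm\<in>E m. \<forall>\<^sub>F n in dir_filter le. norm (x n - j n m xm) < e"
    using Cnets_iff[OF D] by blast+
  have "gg0 le (\<lambda>n m. norm (x n - j n m (x m)))" unfolding gg0_def
  proof (intro allI impI)
    fix e :: real assume "e > 0"
    define d where "d = e/3"
    have "d > 0" using \<open>e>0\<close> by (simp add: d_def)
    then obtain m0 y where y: "y \<in> E m0" and P1: "\<forall>\<^sub>F n in dir_filter le. norm (x n - j n m0 y) < d"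
      using C by blast
    have "\<forall>\<^sub>F m in dir_filter le. \<forall>\<^sub>F n in dir_filter le. norm (j n m0 y - j n m (j m m0 y)) < d"
      using soft_gg[OF S y] \<open>d>0\<close> unfolding gg0_def by blast
    with P1 show "\<forall>\<^sub>F m in dir_filter le. \<forall>\<^sub>F n in dir_filter le. norm (x n - j n m (x m)) < e"
    proof eventually_elim
      case (elim m)
      have xm: "x m \<in> E m" using net by (simp add: is_net_def)
      have jy: "j m m0 y \<in> E m" using soft_in[OF S y] .
      from P1 elim(2) show ?case
      proof eventually_elim
        case (elim n)
        have eq: "x n - j n m (x m) = (x n - j n m0 y) + (j n m0 y - j n m (j m m0 y))
            + j n m (j m m0 y - x m)"
          using soft_diff[OF S jy xm] by simp
        have "norm (j n m (j m m0 y - x m)) \<le> norm (j m m0 y - x m)"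
          using soft_norm[OF S] jy xm soft_sub[OF S] by (simp add: subspace_diff)
        also have "\<dots> < d" using elim(1)[unfolded eventually_at_top_linorder] \<open>norm (x m - j m m0 y) < d\<close>
          by (simp add: norm_minus_commute)
        finally have "norm (j n m (j m m0 y - x m)) < d" .
        then have "norm (x n - j n m (x m)) < d + d + d"
          unfolding eq using elim by (smt (verit) norm_triangle_ineq)
        then show ?case by (simp add: d_def)
      qed
    qed
  qed
  then show "is_net E x \<and> unif_bounded x \<and> gg0 le (\<lambda>n m. norm (x n - j n m (x m)))"
    using net ub by blast
next
  have D: "directed_set le" using soft_dir[OF S] .
  assume A: "is_net E x \<and> unif_bounded x \<and> gg0 le (\<lambda>n m. norm (x n - j n m (x m)))"
  have "\<exists>m. \<exists>xm\<in>E m. \<forall>\<^sub>F n in dir_filter le. norm (x n - j n m xm) < e" if "e > 0" for e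
  proof -
    have "\<forall>\<^sub>F m in dir_filter le. \<forall>\<^sub>F n in dir_filter le. norm (x n - j n m (x m)) < e"
      using A that unfolding gg0_def by blast
    then obtain m where "\<forall>\<^sub>F n in dir_filter le. norm (x n - j n m (x m)) < e"
      using eventually_happens'[OF dir_nbot[OF D]] by blast
    moreover have "x m \<in> E m" using A by (simp add: is_net_def)
    ultimately show ?thesis by blast
  qed
  then show "x \<in> Cnets le E j" using A Cnets_iff[OF D] by blast
qed

lemma Tx_net:
  assumes "bounded_op_net E Et T" "is_net E x" "unif_bounded x"
  shows "is_net Et (\<lambda>n. T n (x n)) \<and> unif_bounded (\<lambda>n. T n (x n))"
proof -
  obtain B where B: "B > 0" "\<And>n x. x \<in> E n \<Longrightarrow> norm (T n x) \<le> B * norm x"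
    using op_bound[OF assms(1)] by blast
  obtain C where C: "\<And>n. norm (x n) \<le> C" using assms(3) unfolding unif_bounded_def by blast
  have bd: "norm (T n (x n)) \<le> B * C" for n
  proof -
    have "norm (T n (x n)) \<le> B * norm (x n)" using B(2) assms(2) unfolding is_net_def by blast
    also have "\<dots> \<le> B * C" using C[of n] B(1) by (intro mult_left_mono) auto
    finally show ?thesis .
  qed
  have "is_net Et (\<lambda>n. T n (x n))"
    using assms(2) unfolding is_net_def by (simp add: op_in[OF assms(1)])
  moreover have "unif_bounded (\<lambda>n. T n (x n))"
    unfolding unif_bounded_def using bd by blast
  ultimately show ?thesis by blast
qed

lemma part1:
  assumes SE: "soft_ind_sys le E j" and SEt: "soft_ind_sys le Et jt"
    and T: "bounded_op_net E Et T"
    and H: "\<forall>m. \<forall>xm\<in>E m. (\<lambda>n. T n (basic_net j m xm n)) \<in> Cnets le Et jt"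
  shows "op_convergent le E j Et jt T"
  unfolding op_convergent_def
proof (intro conjI T ballI)
  have D: "directed_set le" using soft_dir[OF SE] .
  fix x assume xC: "x \<in> Cnets le E j"
  note Cx = iffD1[OF Cnets_iff[OF D, of x E j] xC]
  have net: "is_net E x" and ub: "unif_bounded x"
    and C: "\<forall>e>0. \<exists>m. \<exists>xm\<in>E m. \<forall>\<^sub>F n in dir_filter le. norm (x n - j n m xm) < e"
    using Cx by auto
  obtain B where B: "B > 0" "\<And>n x. x \<in> E n \<Longrightarrow> norm (T n x) \<le> B * norm x"
    using op_bound[OF T] by blast
  have Hx: "\<exists>m. \<exists>xm\<in>Et m. \<forall>\<^sub>F n in dir_filter le. norm (T n (x n) - jt n m xm) < e" if "e > 0" for e
  proof -
    have "e/(2*B) > 0" using that B by simp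
    then obtain m y where y: "y \<in> E m" and P1: "\<forall>\<^sub>F n in dir_filter le. norm (x n - j n m y) < e/(2*B)"
      using C by blast
    have "(\<lambda>n. T n (j n m y)) \<in> Cnets le Et jt" using H[rule_format, OF y] unfolding basic_net_def by simp
    note G = iffD1[OF Cnets_iff[OF D, of "\<lambda>n. T n (j n m y)" Et jt] this]
    note F = conjunct2[OF conjunct2[OF G]]
    have "e/2 > 0" using \<open>e>0\<close> by simp
    from F[rule_format, OF this] obtain m' z where z: "z \<in> Et m'" and P2: "\<forall>\<^sub>F n in dir_filter le. norm (T n (j n m y) - jt n m' z) < e/2"
      by blast
    from P1 P2 have "\<forall>\<^sub>F n in dir_filter le. norm (T n (x n) - jt n m' z) < e"
    proof eventually_elim
      case (elim n)
      have xn: "x n \<in> E n" using net by (simp add: is_net_def)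
      have jn: "j n m y \<in> E n" using soft_in[OF SE y] .
      have eq: "T n (x n) - jt n m' z = T n (x n - j n m y) + (T n (j n m y) - jt n m' z)"
        using op_diff[OF T soft_sub[OF SE] xn jn] by simp
      have "norm (T n (x n - j n m y)) \<le> B * norm (x n - j n m y)"
        using B(2) xn jn soft_sub[OF SE] by (simp add: subspace_diff)
      also have "\<dots> \<le> B * (e/(2*B))" using elim(1) B(1) by (intro mult_left_mono) auto
      also have "\<dots> = e/2" using B(1) by simp
      finally have "norm (T n (x n - j n m y)) \<le> e/2" .
      moreover have "norm (T n (x n) - jt n m' z) \<le> norm (T n (x n - j n m y)) + norm (T n (j n m y) - jt n m' z)"
        unfolding eq by (rule norm_triangle_ineq)
      ultimately show ?case using elim(2) by linarith
    qed
    then show ?thesis using z by blast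
  qed
  have A3: "\<forall>e>0. \<exists>m. \<exists>xm\<in>Et m. \<forall>\<^sub>F n in dir_filter le. norm (T n (x n) - jt n m xm) < e"
    using Hx by blast
  show "(\<lambda>n. T n (x n)) \<in> Cnets le Et jt"
    by (rule iffD2[OF Cnets_iff[OF D]]) (use Tx_net[OF T net ub] A3 in blast)
qed

lemma part2:
  assumes SE: "soft_ind_sys le E j" and SEt: "soft_ind_sys le Et jt"
    and T: "bounded_op_net E Et T"
  shows "op_convergent le E j Et jt T \<longleftrightarrow>
            (\<forall>x\<in>Cnets le E j.
               lim_gg_zero le (\<lambda>n m. norm (jt n m (T m (x m)) - T n (j n m (x m)))))"
proof -
  have D: "directed_set le" using soft_dir[OF SE] .
  obtain B where B: "B > 0" "\<And>n x. x \<in> E n \<Longrightarrow> norm (T n x) \<le> B * norm x"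
    using op_bound[OF T] by blast
  have key: "norm (T n (x n - j n m (x m))) \<le> B * norm (x n - j n m (x m))"
    and eqn: "T n (x n) - T n (j n m (x m)) = T n (x n - j n m (x m))"
    if "is_net E x" for x n m
  proof -
    have xn: "x n \<in> E n" "x m \<in> E m" using that by (auto simp: is_net_def)
    have jn: "j n m (x m) \<in> E n" using soft_in[OF SE xn(2)] .
    show "norm (T n (x n - j n m (x m))) \<le> B * norm (x n - j n m (x m))"
      using B(2) xn jn soft_sub[OF SE] by (simp add: subspace_diff)
    show "T n (x n) - T n (j n m (x m)) = T n (x n - j n m (x m))"
      using op_diff[OF T soft_sub[OF SE] xn(1) jn] by simp
  qed
  show ?thesis
  proof
    assume oc: "op_convergent le E j Et jt T"
    show "\<forall>x\<in>Cnets le E j. lim_gg_zero le (\<lambda>n m. norm (jt n m (T m (x m)) - T n (j n m (x m))))"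
    proof
      fix x assume xC: "x \<in> Cnets le E j"
      then have TC: "(\<lambda>n. T n (x n)) \<in> Cnets le Et jt" using oc unfolding op_convergent_def by blast
      note G1 = iffD1[OF Cnets_gg[OF SE, of x] xC]
      note G2 = iffD1[OF Cnets_gg[OF SEt, of "\<lambda>n. T n (x n)"] TC]
      note net = conjunct1[OF G1]
      note g1 = conjunct2[OF conjunct2[OF G1]]
      note g2 = conjunct2[OF conjunct2[OF G2]]
      have "gg0 le (\<lambda>n m. norm (T n (x n) - jt n m (T m (x m))) + B * norm (x n - j n m (x m)))"
        by (intro gg0_add gg0_scale g1 g2 B(1))
      then have "gg0 le (\<lambda>n m. norm (jt n m (T m (x m)) - T n (j n m (x m))))"
      proof (rule gg0_mono)
        fix n m
        have "jt n m (T m (x m)) - T n (j n m (x m)) =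
              - (T n (x n) - jt n m (T m (x m))) + (T n (x n) - T n (j n m (x m)))" by simp
        then have "norm (jt n m (T m (x m)) - T n (j n m (x m))) \<le>
              norm (T n (x n) - jt n m (T m (x m))) + norm (T n (x n - j n m (x m)))"
          using eqn[OF net] by (metis norm_minus_cancel norm_triangle_ineq)
        then show "norm (jt n m (T m (x m)) - T n (j n m (x m))) \<le>
              norm (T n (x n) - jt n m (T m (x m))) + B * norm (x n - j n m (x m))"
          using key[OF net, of n m] by linarith
      qed
      then show "lim_gg_zero le (\<lambda>n m. norm (jt n m (T m (x m)) - T n (j n m (x m))))"
        by (subst lim_gg_zero_iff[OF D]) simp_all
    qed
  next
    assume H: "\<forall>x\<in>Cnets le E j. lim_gg_zero le (\<lambda>n m. norm (jt n m (T m (x m)) - T n (j n m (x m))))"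
    show "op_convergent le E j Et jt T"
      unfolding op_convergent_def
    proof (intro conjI T ballI)
      fix x assume xC: "x \<in> Cnets le E j"
      note G1 = iffD1[OF Cnets_gg[OF SE, of x] xC]
      note net = conjunct1[OF G1]
      note ub = conjunct1[OF conjunct2[OF G1]]
      note g1 = conjunct2[OF conjunct2[OF G1]]
      have g2: "gg0 le (\<lambda>n m. norm (jt n m (T m (x m)) - T n (j n m (x m))))"
        using H[rule_format, OF xC] by (subst (asm) lim_gg_zero_iff[OF D]) simp_all
      have "gg0 le (\<lambda>n m. B * norm (x n - j n m (x m)) + norm (jt n m (T m (x m)) - T n (j n m (x m))))"
        by (intro gg0_add gg0_scale g1 g2 B(1))
      then have "gg0 le (\<lambda>n m. norm (T n (x n) - jt n m (T m (x m))))"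
      proof (rule gg0_mono)
        fix n m
        have "T n (x n) - jt n m (T m (x m)) =
              (T n (x n) - T n (j n m (x m))) - (jt n m (T m (x m)) - T n (j n m (x m)))" by simp
        then have "norm (T n (x n) - jt n m (T m (x m))) \<le>
              norm (T n (x n - j n m (x m))) + norm (jt n m (T m (x m)) - T n (j n m (x m)))"
          using eqn[OF net] by (metis norm_triangle_ineq4)
        then show "norm (T n (x n) - jt n m (T m (x m))) \<le>
              B * norm (x n - j n m (x m)) + norm (jt n m (T m (x m)) - T n (j n m (x m)))"
          using key[OF net, of n m] by linarith
      qed
      then show "(\<lambda>n. T n (x n)) \<in> Cnets le Et jt"
        using Tx_net[OF T net ub] by (intro iffD2[OF Cnets_gg[OF SEt]]) auto
    qed
  qed
qed


lemma C0_add: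
  assumes sub: "\<And>n. subspace (E n)" and u: "u \<in> C0nets le E" and v: "v \<in> C0nets le E"
  shows "(\<lambda>n. u n + v n) \<in> C0nets le E"
proof -
  have un: "\<And>n. u n \<in> E n" and vn: "\<And>n. v n \<in> E n"
    using u v unfolding C0nets_def is_net_def by auto
  obtain Bu where Bu: "\<And>n. norm (u n) \<le> Bu" using u unfolding C0nets_def unif_bounded_def by blast
  obtain Bv where Bv: "\<And>n. norm (v n) \<le> Bv" using v unfolding C0nets_def unif_bounded_def by blast
  have tu: "((\<lambda>n. norm (u n)) \<longlongrightarrow> 0) (dir_filter le)" using u unfolding C0nets_def by blast
  have tv: "((\<lambda>n. norm (v n)) \<longlongrightarrow> 0) (dir_filter le)" using v unfolding C0nets_def by blast
  have net: "is_net E (\<lambda>n. u n + v n)" unfolding is_net_def using sub un vn by (simp add: subspace_add)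
  have "norm (u n + v n) \<le> Bu + Bv" for n
    using norm_triangle_ineq[of "u n" "v n"] Bu[of n] Bv[of n] by linarith
  then have ub: "unif_bounded (\<lambda>n. u n + v n)" unfolding unif_bounded_def by blast
  have t2: "((\<lambda>n. norm (u n) + norm (v n)) \<longlongrightarrow> 0) (dir_filter le)"
    using tendsto_add[OF tu tv] by simp
  have "((\<lambda>n. norm (u n + v n)) \<longlongrightarrow> 0) (dir_filter le)"
    by (rule tendsto_sandwich[OF _ _ tendsto_const t2]) (auto intro: always_eventually norm_triangle_ineq)
  then show ?thesis using net ub unfolding C0nets_def by blast
qed

lemma C0_neg:
  assumes sub: "\<And>n. subspace (E n)" and u: "u \<in> C0nets le E"
  shows "(\<lambda>n. - u n) \<in> C0nets le E"
  using u sub unfolding C0nets_def is_net_def unif_bounded_def by (auto simp: subspace_neg)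

lemma jlim_eq:
  assumes sub: "\<And>n. subspace (E n)" and d: "(\<lambda>n. u n - v n) \<in> C0nets le E"
  shows "jlim le E j u = jlim le E j v"
proof -
  have nd: "(\<lambda>n. - (u n - v n)) \<in> C0nets le E" by (rule C0_neg[OF sub d])
  have "(\<lambda>n. y n - u n) \<in> C0nets le E \<longleftrightarrow> (\<lambda>n. y n - v n) \<in> C0nets le E" for y
  proof
    assume "(\<lambda>n. y n - u n) \<in> C0nets le E"
    from C0_add[OF sub this d] show "(\<lambda>n. y n - v n) \<in> C0nets le E" by simp
  next
    assume "(\<lambda>n. y n - v n) \<in> C0nets le E"
    from C0_add[OF sub this nd] show "(\<lambda>n. y n - u n) \<in> C0nets le E" by simp
  qed
  then show ?thesis unfolding jlim_def by blast
qed

lemma self_jlim: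
  assumes sub: "\<And>n. subspace (E n)" and x: "x \<in> Cnets le E j"
  shows "x \<in> jlim le E j x"
proof -
  have "(\<lambda>n. x n - x n) \<in> C0nets le E"
    using sub unfolding C0nets_def is_net_def unif_bounded_def by (auto simp: subspace_0 intro: exI[of _ 0])
  then show ?thesis using x unfolding jlim_def by blast
qed

lemma C0_map:
  assumes S: "bounded_op_net Et Eh S" and subt: "\<And>n. subspace (Et n)" and subh: "\<And>n. subspace (Eh n)"
    and a: "\<And>n. a n \<in> Et n" and b: "\<And>n. b n \<in> Et n" and d: "(\<lambda>n. b n - a n) \<in> C0nets le Et"
  shows "(\<lambda>n. S n (a n) - S n (b n)) \<in> C0nets le Eh"
proof -
  obtain B where B: "B > 0" "\<And>n x. x \<in> Et n \<Longrightarrow> norm (S n x) \<le> B * norm x"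
    using op_bound[OF S] by blast
  have eq: "S n (a n) - S n (b n) = S n (a n - b n)" for n
    using op_diff[OF S subt a b] by simp
  have le: "norm (S n (a n) - S n (b n)) \<le> B * norm (b n - a n)" for n
    unfolding eq using B(2)[of "a n - b n" n] subt a b by (simp add: subspace_diff norm_minus_commute)
  obtain K where K: "\<And>n. norm (b n - a n) \<le> K" using d unfolding C0nets_def unif_bounded_def by blast
  have t: "((\<lambda>n. norm (b n - a n)) \<longlongrightarrow> 0) (dir_filter le)" using d unfolding C0nets_def by blast
  have "norm (S n (a n) - S n (b n)) \<le> B * K" for n
  proof -
    have "B * norm (b n - a n) \<le> B * K" using K[of n] B(1) by (intro mult_left_mono) auto
    then show ?thesis using le[of n] by linarith
  qed
  then have ub: "unif_bounded (\<lambda>n. S n (a n) - S n (b n))" unfolding unif_bounded_def by blast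
  have net: "is_net Eh (\<lambda>n. S n (a n) - S n (b n))"
    unfolding is_net_def using subh op_in[OF S a] op_in[OF S b] by (simp add: subspace_diff)
  have t2: "((\<lambda>n. B * norm (b n - a n)) \<longlongrightarrow> 0) (dir_filter le)"
    using tendsto_mult_left[OF t, of B] by simp
  have "((\<lambda>n. norm (S n (a n) - S n (b n))) \<longlongrightarrow> 0) (dir_filter le)"
    by (rule tendsto_sandwich[OF _ _ tendsto_const t2]) (auto intro: always_eventually le)
  then show ?thesis using net ub unfolding C0nets_def by blast
qed

lemma comp_bounded:
  assumes T: "bounded_op_net E Et T" and S: "bounded_op_net Et Eh S"
  shows "bounded_op_net E Eh (\<lambda>n. S n \<circ> T n)"
proof -
  obtain B where B: "B > 0" "\<And>n x. x \<in> E n \<Longrightarrow> norm (T n x) \<le> B * norm x"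
    using op_bound[OF T] by blast
  obtain B' where B': "B' > 0" "\<And>n x. x \<in> Et n \<Longrightarrow> norm (S n x) \<le> B' * norm x"
    using op_bound[OF S] by blast
  have bd: "norm (S n (T n x)) \<le> (B' * B) * norm x" if "x \<in> E n" for n x
  proof -
    have "norm (S n (T n x)) \<le> B' * norm (T n x)" using B'(2) op_in[OF T that] by blast
    also have "\<dots> \<le> B' * (B * norm x)" using B(2)[OF that] B'(1) by (intro mult_left_mono) auto
    finally show ?thesis by simp
  qed
  have "(\<forall>x\<in>E n. S n (T n x) \<in> Eh n) \<and>
          (\<forall>x\<in>E n. \<forall>y\<in>E n. S n (T n (x + y)) = S n (T n x) + S n (T n y)) \<and>
          (\<forall>c. \<forall>x\<in>E n. S n (T n (c *\<^sub>R x)) = c *\<^sub>R S n (T n x))" for n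
    using T S unfolding bounded_op_net_def by simp
  then show ?thesis unfolding bounded_op_net_def comp_def using bd by blast
qed

lemma part3:
  assumes SE: "soft_ind_sys le E j" and SEt: "soft_ind_sys le Et jt" and SEh: "soft_ind_sys le Eh jh"
    and oT: "op_convergent le E j Et jt T" and oS: "op_convergent le Et jt Eh jh S"
  shows "op_convergent le E j Eh jh (\<lambda>n. S n \<circ> T n) \<and>
              (\<forall>X\<in>Einf le E j.
                 op_limit le Eh jh (\<lambda>n. S n \<circ> T n) X
                   = op_limit le Eh jh S (op_limit le Et jt T X))"
proof
  have T: "bounded_op_net E Et T" and TC: "\<And>x. x \<in> Cnets le E j \<Longrightarrow> (\<lambda>n. T n (x n)) \<in> Cnets le Et jt"
    using oT unfolding op_convergent_def by auto
  have S: "bounded_op_net Et Eh S" and SC: "\<And>x. x \<in> Cnets le Et jt \<Longrightarrow> (\<lambda>n. S n (x n)) \<in> Cnets le Eh jh"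
    using oS unfolding op_convergent_def by auto
  have subt: "\<And>n. subspace (Et n)" using soft_sub[OF SEt] .
  have subh: "\<And>n. subspace (Eh n)" using soft_sub[OF SEh] .
  show "op_convergent le E j Eh jh (\<lambda>n. S n \<circ> T n)"
    unfolding op_convergent_def using comp_bounded[OF T S] TC SC by simp
  show "\<forall>X\<in>Einf le E j. op_limit le Eh jh (\<lambda>n. S n \<circ> T n) X
                   = op_limit le Eh jh S (op_limit le Et jt T X)"
  proof
    fix X assume "X \<in> Einf le E j"
    then obtain x where x: "x \<in> Cnets le E j" and X: "X = jlim le E j x" unfolding Einf_def by blast
    define x0 where "x0 = (SOME x. x \<in> X)"
    have "x \<in> X" unfolding X by (rule self_jlim[OF soft_sub[OF SE] x])
    then have "x0 \<in> X" unfolding x0_def using someI[of "\<lambda>x. x \<in> X" x] by simp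
    then have x0C: "x0 \<in> Cnets le E j" unfolding X jlim_def by blast
    define Y where "Y = jlim le Et jt (\<lambda>n. T n (x0 n))"
    have Y: "op_limit le Et jt T X = Y" unfolding op_limit_def Y_def x0_def ..
    define y0 where "y0 = (SOME y. y \<in> Y)"
    have "(\<lambda>n. T n (x0 n)) \<in> Y" unfolding Y_def by (rule self_jlim[OF subt TC[OF x0C]])
    then have "y0 \<in> Y" unfolding y0_def using someI[of "\<lambda>y. y \<in> Y" "\<lambda>n. T n (x0 n)"] by simp
    then have y0C: "y0 \<in> Cnets le Et jt" and d: "(\<lambda>n. y0 n - T n (x0 n)) \<in> C0nets le Et"
      unfolding Y_def jlim_def by auto
    have a: "T n (x0 n) \<in> Et n" for n
      using TC[OF x0C] unfolding Cnets_def is_net_def by blast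
    have b: "y0 n \<in> Et n" for n
      using y0C unfolding Cnets_def is_net_def by blast
    have "(\<lambda>n. S n (T n (x0 n)) - S n (y0 n)) \<in> C0nets le Eh"
      by (rule C0_map[OF S subt subh a b d])
    then have "jlim le Eh jh (\<lambda>n. S n (T n (x0 n))) = jlim le Eh jh (\<lambda>n. S n (y0 n))"
      by (rule jlim_eq[OF subh])
    then show "op_limit le Eh jh (\<lambda>n. S n \<circ> T n) X = op_limit le Eh jh S (op_limit le Et jt T X)"
      unfolding Y unfolding op_limit_def x0_def[symmetric] y0_def[symmetric] by simp
  qed
qed

theorem mainTheorem9:
  fixes le :: "'i \<Rightarrow> 'i \<Rightarrow> bool"
    and E :: "'i \<Rightarrow> 'a::banach set" and j :: "'i \<Rightarrow> 'i \<Rightarrow> 'a \<Rightarrow> 'a"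
    and Et :: "'i \<Rightarrow> 'b::banach set" and jt :: "'i \<Rightarrow> 'i \<Rightarrow> 'b \<Rightarrow> 'b"
    and T :: "'i \<Rightarrow> 'a \<Rightarrow> 'b"
  assumes "soft_ind_sys le E j" and "soft_ind_sys le Et jt"
    and "bounded_op_net E Et T"
  shows "((\<forall>m. \<forall>xm\<in>E m. (\<lambda>n. T n (basic_net j m xm n)) \<in> Cnets le Et jt)
            \<longrightarrow> op_convergent le E j Et jt T)
       \<and> (op_convergent le E j Et jt T \<longleftrightarrow>
            (\<forall>x\<in>Cnets le E j.
               lim_gg_zero le (\<lambda>n m. norm (jt n m (T m (x m)) - T n (j n m (x m))))))
       \<and> (\<forall>(Eh :: 'i \<Rightarrow> 'c::banach set) (jh :: 'i \<Rightarrow> 'i \<Rightarrow> 'c \<Rightarrow> 'c) (S :: 'i \<Rightarrow> 'b \<Rightarrow> 'c).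
            soft_ind_sys le Eh jh \<longrightarrow> op_convergent le E j Et jt T
            \<longrightarrow> op_convergent le Et jt Eh jh S \<longrightarrow>
              op_convergent le E j Eh jh (\<lambda>n. S n \<circ> T n) \<and>
              (\<forall>X\<in>Einf le E j.
                 op_limit le Eh jh (\<lambda>n. S n \<circ> T n) X
                   = op_limit le Eh jh S (op_limit le Et jt T X)))"
proof (intro conjI)
  show "(\<forall>m. \<forall>xm\<in>E m. (\<lambda>n. T n (basic_net j m xm n)) \<in> Cnets le Et jt)
            \<longrightarrow> op_convergent le E j Et jt T"
    using part1[OF assms] by blast
  show "op_convergent le E j Et jt T \<longleftrightarrow>
            (\<forall>x\<in>Cnets le E j.
               lim_gg_zero le (\<lambda>n m. norm (jt n m (T m (x m)) - T n (j n m (x m)))))"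
    by (rule part2[OF assms])
  show "\<forall>(Eh :: 'i \<Rightarrow> 'c::banach set) (jh :: 'i \<Rightarrow> 'i \<Rightarrow> 'c \<Rightarrow> 'c) (S :: 'i \<Rightarrow> 'b \<Rightarrow> 'c).
            soft_ind_sys le Eh jh \<longrightarrow> op_convergent le E j Et jt T
            \<longrightarrow> op_convergent le Et jt Eh jh S \<longrightarrow>
              op_convergent le E j Eh jh (\<lambda>n. S n \<circ> T n) \<and>
              (\<forall>X\<in>Einf le E j.
                 op_limit le Eh jh (\<lambda>n. S n \<circ> T n) X
                   = op_limit le Eh jh S (op_limit le Et jt T X))"
    using part3[OF assms(1,2)] by blast
qed

end
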